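(* Let $\phi$ be a posterior family for a model $\pi$ with data space $Y$ and parameter space $\Theta$, and let $f$ be a test quantity. (1) For any fixed $y\in Y$: if, as the number of sample draws $M\to\infty$, we have for all $i\in\{0,\dots,M\}$ that $Q_{\phi,f}(i\mid y)\to\frac{i+1}{M+1}$, then $q_{\phi,f}(x\mid y)=x$ for all $x\in[0,1]$. (2) If, as $M\to\infty$, we have for all $i\in\{0,\dots,M\}$ that $\int_Y Q_{\phi,f}(i\mid y)\pi_{\text{marg}}(y)\,\mathrm{d}y\to\frac{i+1}{M+1}$, then $\phi$ passes continuous SBC with respect to $f$.
   Context: Model $\pi$: prior density $\pi_{\text{prior}}(\theta)$ on $\Theta$, observation density $\pi_{\text{obs}}(y\mid\theta)$ on $Y$, $\pi_{\text{marg}}(y)=\int_\Theta\pi_{\text{obs}}(y\mid\theta)\pi_{\text{prior}}(\theta)\,\mathrm{d}\theta$, $\pi_{\text{post}}(\theta\mid y)=\pi_{\text{obs}}(y\mid\theta)\pi_{\text{prior}}(\theta)/\pi_{\text{marg}}(y)$. A posterior family is $\phi:\Theta\times Y\to\mathbb{R}^+$ with $\int_\Theta\phi(\theta\mid y)\,\mathrm{d}\theta=1$ for all $y$; a test quantity is a measurable $f:\Theta\times Y\to\mathbb{R}$. Sample quantities: for $M\in\mathbb{N}$, $\theta_1,\dots,\theta_M$ i.i.d. from $\phi(\cdot\mid y)$, $N^{\mathtt{less}}=\sum_m\mathbb{I}[f(\theta_m,y)<f(\tilde\theta,y)]$, $N^{\mathtt{equals}}=\sum_m\mathbb{I}[f(\theta_m,y)=f(\tilde\theta,y)]$,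 $K$ uniform on $\{0,\dots,N^{\mathtt{equals}}\}$, $N^{\mathtt{total}}=N^{\mathtt{less}}+K$; $R_{\phi,f}(i\mid\tilde\theta,y)=\Pr(N^{\mathtt{total}}\le i)$; $Q_{\phi,f}(i\mid y)=\int_\Theta\pi_{\text{post}}(\tilde\theta\mid y)R_{\phi,f}(i\mid\tilde\theta,y)\,\mathrm{d}\tilde\theta$. Continuous quantities: $C_{\phi,f}(s\mid y)=\int_\Theta\mathbb{I}[f(\theta,y)\le s]\phi(\theta\mid y)\,\mathrm{d}\theta$, $D_{\phi,f}(s\mid y)=\int_\Theta\mathbb{I}[f(\theta,y)=s]\phi(\theta\mid y)\,\mathrm{d}\theta$; with $U\sim\mathrm{uniform}[0,1]$, $r_{\phi,f}(x\mid\tilde\theta,y)=\Pr\big(C_{\phi,f}(f(\tilde\theta,y)\mid y)-U\,D_{\phi,f}(f(\tilde\theta,y)\mid y)\le x\big)$ and $q_{\phi,f}(x\mid y)=\int_\Theta\pi_{\text{post}}(\tilde\theta\mid y)r_{\phi,f}(x\mid\tilde\theta,y)\,\mathrm{d}\tilde\theta$ for $x\in[0,1]$. $\phi$ passes continuous SBC w.r.t. $f$ if $\int_Y q_{\phi,f}(x\mid y)\pi_{\text{marg}}(y)\,\mathrm{d}y=x$ for all $x\in[0,1]$. *)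

theory Defs
  imports "HOL-Probability.Probability"
begin

text \<open>Model: parameter space \<Theta> = 'a, data space Y = 'b (Euclidean spaces with
 Lebesgue measure). Conventions: obs y \<theta> = pi_obs(y | \<theta>), phi \<theta> y = phi(\<theta> | y),
 f \<theta> y = f(\<theta>, y).\<close>

definition marg :: "('a::euclidean_space \<Rightarrow> real) \<Rightarrow> ('b \<Rightarrow> 'a \<Rightarrow> real) \<Rightarrow> 'b \<Rightarrow> real" where
  "marg prior obs y = (\<integral>\<theta>. obs y \<theta> * prior \<theta> \<partial>lborel)"

definition post :: "('a::euclidean_space \<Rightarrow> real) \<Rightarrow> ('b \<Rightarrow> 'a \<Rightarrow> real) \<Rightarrow> 'a \<Rightarrow> 'b \<Rightarrow> real" where
  "post prior obs \<theta> y = obs y \<theta> * prior \<theta> / marg prior obs y"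

definition samples :: "('a::euclidean_space \<Rightarrow> 'b \<Rightarrow> real) \<Rightarrow> nat \<Rightarrow> 'b \<Rightarrow> (nat \<Rightarrow> 'a) measure" where
  "samples phi M y = PiM {..<M} (\<lambda>_. density lborel (\<lambda>\<theta>. ennreal (phi \<theta> y)))"

definition N_less :: "('a \<Rightarrow> 'b \<Rightarrow> real) \<Rightarrow> nat \<Rightarrow> 'a \<Rightarrow> 'b \<Rightarrow> (nat \<Rightarrow> 'a) \<Rightarrow> nat" where
  "N_less f M \<theta>t y \<theta>s = card {m \<in> {..<M}. f (\<theta>s m) y < f \<theta>t y}"

definition N_equals :: "('a \<Rightarrow> 'b \<Rightarrow> real) \<Rightarrow> nat \<Rightarrow> 'a \<Rightarrow> 'b \<Rightarrow> (nat \<Rightarrow> 'a) \<Rightarrow> nat" where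
  "N_equals f M \<theta>t y \<theta>s = card {m \<in> {..<M}. f (\<theta>s m) y = f \<theta>t y}"

definition R_rank :: "('a::euclidean_space \<Rightarrow> 'b \<Rightarrow> real) \<Rightarrow> ('a \<Rightarrow> 'b \<Rightarrow> real) \<Rightarrow> nat \<Rightarrow> nat \<Rightarrow> 'a \<Rightarrow> 'b \<Rightarrow> real" where
  "R_rank phi f M i \<theta>t y =
     (\<integral>\<theta>s. measure_pmf.prob (pmf_of_set {0..N_equals f M \<theta>t y \<theta>s})
                 {k. N_less f M \<theta>t y \<theta>s + k \<le> i} \<partial>samples phi M y)"

definition Q_rank :: "('a::euclidean_space \<Rightarrow> real) \<Rightarrow> ('b \<Rightarrow> 'a \<Rightarrow> real) \<Rightarrow> ('a \<Rightarrow> 'b \<Rightarrow> real)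
     \<Rightarrow> ('a \<Rightarrow> 'b \<Rightarrow> real) \<Rightarrow> nat \<Rightarrow> nat \<Rightarrow> 'b \<Rightarrow> real" where
  "Q_rank prior obs phi f M i y = (\<integral>\<theta>t. post prior obs \<theta>t y * R_rank phi f M i \<theta>t y \<partial>lborel)"

definition C_cdf :: "('a::euclidean_space \<Rightarrow> 'b \<Rightarrow> real) \<Rightarrow> ('a \<Rightarrow> 'b \<Rightarrow> real) \<Rightarrow> real \<Rightarrow> 'b \<Rightarrow> real" where
  "C_cdf phi f s y = (\<integral>\<theta>. indicator {\<theta>. f \<theta> y \<le> s} \<theta> * phi \<theta> y \<partial>lborel)"

definition D_atom :: "('a::euclidean_space \<Rightarrow> 'b \<Rightarrow> real) \<Rightarrow> ('a \<Rightarrow> 'b \<Rightarrow> real) \<Rightarrow> real \<Rightarrow> 'b \<Rightarrow> real" where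
  "D_atom phi f s y = (\<integral>\<theta>. indicator {\<theta>. f \<theta> y = s} \<theta> * phi \<theta> y \<partial>lborel)"

definition r_cont :: "('a::euclidean_space \<Rightarrow> 'b \<Rightarrow> real) \<Rightarrow> ('a \<Rightarrow> 'b \<Rightarrow> real) \<Rightarrow> real \<Rightarrow> 'a \<Rightarrow> 'b \<Rightarrow> real" where
  "r_cont phi f x \<theta>t y =
     measure (uniform_measure lborel {0..1})
       {u. C_cdf phi f (f \<theta>t y) y - u * D_atom phi f (f \<theta>t y) y \<le> x}"

definition q_cont :: "('a::euclidean_space \<Rightarrow> real) \<Rightarrow> ('b \<Rightarrow> 'a \<Rightarrow> real) \<Rightarrow> ('a \<Rightarrow> 'b \<Rightarrow> real)
     \<Rightarrow> ('a \<Rightarrow> 'b \<Rightarrow> real) \<Rightarrow> real \<Rightarrow> 'b \<Rightarrow> real" where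
  "q_cont prior obs phi f x y = (\<integral>\<theta>t. post prior obs \<theta>t y * r_cont phi f x \<theta>t y \<partial>lborel)"

definition passes_continuous_SBC :: "('a::euclidean_space \<Rightarrow> real) \<Rightarrow> ('b::euclidean_space \<Rightarrow> 'a \<Rightarrow> real)
     \<Rightarrow> ('a \<Rightarrow> 'b \<Rightarrow> real) \<Rightarrow> ('a \<Rightarrow> 'b \<Rightarrow> real) \<Rightarrow> bool" where
  "passes_continuous_SBC prior obs phi f \<longleftrightarrow>
     (\<forall>x\<in>{0..1}. (\<integral>y. q_cont prior obs phi f x y * marg prior obs y \<partial>lborel) = x)"

end

theory Submission
  imports Defs "HOL-Probability.Probability"
begin

lemma aux7: "(d::real) \<le> 7 * (e::real) \<Longrightarrow> e \<le> d / 8 \<Longrightarrow> 0 < d \<Longrightarrow> False"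
  by linarith

lemma sandwich:
  fixes Q :: "nat \<Rightarrow> nat \<Rightarrow> real" and q :: "real \<Rightarrow> real"
  assumes mono: "mono q" and q01: "\<And>x. 0 \<le> q x \<and> q x \<le> 1"
  and up: "\<And>M i \<eta>. 1 \<le> M \<Longrightarrow> 0 < \<eta> \<Longrightarrow> 1/real M \<le> \<eta> \<Longrightarrow> i \<le> M \<Longrightarrow>
     Q M i \<le> q (real (i+1)/real M + 2*\<eta>) + 2/(real M*\<eta>^2)"
  and low: "\<And>M i \<eta>. 1 \<le> M \<Longrightarrow> 0 < \<eta> \<Longrightarrow> 1/real M \<le> \<eta> \<Longrightarrow> i \<le> M \<Longrightarrow>
     Q M i = 0 \<or> q (real (i+1)/real M - 4*\<eta>) - 2/(real M*\<eta>^2) \<le> Q M i"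
  and hyp: "\<forall>\<epsilon>>0. \<exists>M0. \<forall>M\<ge>M0. \<forall>i\<le>M. \<bar>Q M i - real (i+1)/real (M+1)\<bar> < \<epsilon>"
  and x: "0 \<le> x" "x \<le> 1"
  shows "q x = x"
proof -
  have key: "\<bar>q x - x\<bar> \<le> 7*\<eta>" if eta: "0 < \<eta>" "\<eta> \<le> 1" for \<eta>
  proof -
    obtain M0 where M0: "\<forall>M\<ge>M0. \<forall>i\<le>M. \<bar>Q M i - real (i+1)/real (M+1)\<bar> < \<eta>"
      using hyp eta by auto
    define M where "M = max M0 (nat \<lceil>2/\<eta>^3\<rceil>) + 1"
    have MM0: "M \<ge> M0" unfolding M_def by auto
    have e2: "\<eta>^2 \<le> 1" using eta by (simp add: power_le_one)
    have e3: "\<eta>^3 \<le> \<eta>"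
    proof -
      have "\<eta>^3 = \<eta> * \<eta>^2" by algebra
      also have "\<dots> \<le> \<eta>" using e2 eta by (intro mult_left_le) auto
      finally show ?thesis .
    qed
    have Mge: "real M \<ge> 2/\<eta>^3" unfolding M_def
      by (smt (verit, ccfv_SIG) le_nat_iff max.cobounded2 of_nat_1 of_nat_add of_nat_le_iff real_nat_ceiling_ge)
    have Mpos: "real M > 0" unfolding M_def by simp
    have M1: "1 \<le> M" unfolding M_def by simp
    have eM: "\<eta>^3 * real M \<ge> 2" using Mge eta by (simp add: field_simps)
    have etaM: "\<eta> * real M \<ge> 2"
      using eM e3 Mpos by (smt (verit) mult_right_mono)
    have invM: "1/real M \<le> \<eta>" using etaM Mpos by (simp add: field_simps)
    have err: "2/(real M*\<eta>^2) \<le> \<eta>" using eM Mpos eta by (simp add: field_simps power3_eq_cube power2_eq_square)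
    have invM1: "2/(real M + 1) \<le> \<eta>" using etaM Mpos eta by (simp add: field_simps)
    have lower: "x - 5*\<eta> \<le> q x"
    proof (cases "x \<le> 4*\<eta>")
      case True then show ?thesis using q01[of x] eta by linarith
    next
      case False
      define j where "j = nat \<lfloor>(x-2*\<eta>)*real M\<rfloor>"
      have xm: "(x-2*\<eta>)*real M \<ge> 2*\<eta>*real M" using False Mpos by (intro mult_right_mono) auto
      have j1: "j \<ge> 1" unfolding j_def using xm etaM by linarith
      have jle: "real j \<le> (x-2*\<eta>)*real M" unfolding j_def using xm etaM by linarith
      have jgt: "real j > (x-2*\<eta>)*real M - 1" unfolding j_def using xm etaM by linarith
      have jM: "j \<le> M" using jle x eta Mpos
        by (smt (verit, ccfv_SIG) mult_le_cancel_right1 of_nat_le_iff)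
      define i where "i = j - 1"
      have ij: "real (i+1) = real j" "i \<le> M" using j1 jM unfolding i_def by auto
      have "real j / real M \<le> x - 2*\<eta>" using jle Mpos by (simp add: divide_le_eq)
      hence "real (i+1)/real M + 2*\<eta> \<le> x" using ij by simp
      hence "q (real (i+1)/real M + 2*\<eta>) \<le> q x" by (rule monoD[OF mono])
      hence Qu: "Q M i \<le> q x + \<eta>" using up[OF M1 eta(1) invM ij(2)] err by linarith
      have Qh: "Q M i > real j/real (M+1) - \<eta>" using M0 MM0 ij by fastforce
      have c1: "real j/real (M+1) \<ge> ((x-2*\<eta>)*real M - 1)/(real M + 1)"
        using jgt Mpos by (subst of_nat_add) (auto intro!: divide_right_mono)
      have c2: "((x-2*\<eta>)*real M - 1)/(real M + 1) = (x - 2*\<eta>) - (x - 2*\<eta> + 1)/(real M + 1)"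
        using Mpos by (simp add: field_simps)
      have c3: "(x - 2*\<eta> + 1)/(real M + 1) \<le> 2/(real M + 1)"
        using x eta Mpos by (intro divide_right_mono) auto
      have "real j/real (M+1) \<ge> x - 3*\<eta>" using c1 c2 c3 invM1 by linarith
      then show ?thesis using Qu Qh by linarith
    qed
    have upper: "q x \<le> x + 7*\<eta>"
    proof (cases "x + 4*\<eta> \<ge> 1")
      case True then show ?thesis using q01[of x] eta by linarith
    next
      case False
      define j where "j = nat \<lceil>(x+4*\<eta>)*real M\<rceil>"
      have xm: "(x+4*\<eta>)*real M \<ge> 4*\<eta>*real M" using x Mpos by (intro mult_right_mono) auto
      have xM: "(x+4*\<eta>)*real M < real M" using False Mpos by simp
      have j1: "j \<ge> 1" unfolding j_def using xm etaM by linarith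
      have jge: "real j \<ge> (x+4*\<eta>)*real M" unfolding j_def using xm etaM by linarith
      have jlt: "real j < (x+4*\<eta>)*real M + 1" unfolding j_def using xm etaM by linarith
      have jM: "j \<le> M" unfolding j_def using xM by linarith
      define i where "i = j - 1"
      have ij: "real (i+1) = real j" "i \<le> M" using j1 jM unfolding i_def by auto
      have "real j / real M \<ge> x + 4*\<eta>" using jge Mpos by (simp add: le_divide_eq)
      hence "x \<le> real (i+1)/real M - 4*\<eta>" using ij by simp
      hence qx: "q x \<le> q (real (i+1)/real M - 4*\<eta>)" by (rule monoD[OF mono])
      have Qh: "\<bar>Q M i - real j/real (M+1)\<bar> < \<eta>" using M0 MM0 ij by fastforce
      have "4*\<eta>*real M \<le> real j" using jge xm by linarith
      then have d1: "real j/real (M+1) \<ge> 4*\<eta>*real M/(real M + 1)"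
        using Mpos by (subst of_nat_add) (auto intro!: divide_right_mono)
      have d2: "4*\<eta>*real M/(real M + 1) \<ge> 2*\<eta>" using Mpos eta M1
        by (simp add: field_simps)
      have "Q M i > 0" using Qh eta d1 d2 by linarith
      hence "q (real (i+1)/real M - 4*\<eta>) - 2/(real M*\<eta>^2) \<le> Q M i"
        using low[OF M1 eta(1) invM ij(2)] by auto
      hence qQ: "q x \<le> Q M i + \<eta>" using qx err by linarith
      have c1: "real j/real (M+1) \<le> ((x+4*\<eta>)*real M + 1)/(real M + 1)"
        using jlt Mpos by (subst of_nat_add) (auto intro!: divide_right_mono)
      have c2: "((x+4*\<eta>)*real M + 1)/(real M + 1) = (x+4*\<eta>) - (x + 4*\<eta> - 1)/(real M + 1)"
        using Mpos by (simp add: field_simps)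
      have c3: "(x + 4*\<eta> - 1)/(real M + 1) \<ge> -1/(real M + 1)"
        using x eta Mpos by (intro divide_right_mono) auto
      have c4: "1/(real M + 1) \<le> \<eta>" using invM1 Mpos by (simp add: field_simps)
      have "real j/real (M+1) \<le> x + 4*\<eta> + \<eta>" using c1 c2 c3 c4 by linarith
      then show ?thesis using qQ Qh by linarith
    qed
    show ?thesis using lower upper by linarith
  qed
  show ?thesis
  proof (rule ccontr)
    assume ne: "q x \<noteq> x"
    define \<eta> where "\<eta> = min 1 (\<bar>q x - x\<bar>/8)"
    have "0 < \<eta>" "\<eta> \<le> 1" using ne unfolding \<eta>_def by auto
    from key[OF this] have "\<bar>q x - x\<bar> \<le> 7*\<eta>" .
    moreover have "\<eta> \<le> \<bar>q x - x\<bar>/8" unfolding \<eta>_def by (rule min.cobounded2)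
    moreover have "\<bar>q x - x\<bar> > 0" using ne by simp
    ultimately show False using aux7 by blast
  qed
qed

abbreviation "U01 \<equiv> uniform_measure lborel {0..1::real}"

lemma U01_sets: "{u::real. c - u*d \<le> x} \<in> sets lborel"
  by simp

lemma U01_measure: "measure U01 {u. c - u*d \<le> x} = measure lborel ({0..1} \<inter> {u. c - u*d \<le> x})"
  by (subst measure_uniform_measure) (auto simp: U01_sets)

lemma U01_prob: "prob_space U01"
  by (rule prob_space_uniform_measure) auto

lemma r_ge:
  assumes "0 \<le> d" "0 \<le> u0" "u0 \<le> 1" "c - d + u0*d \<le> x"
  shows "u0 \<le> measure U01 {u. c - u*d \<le> x}"
proof -
  have sub: "{1-u0..1} \<subseteq> {0..1} \<inter> {u. c - u*d \<le> x}"
  proof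
    fix u assume u: "u \<in> {1-u0..1}"
    have "(1-u0)*d \<le> u*d" using u assms by (intro mult_right_mono) auto
    then show "u \<in> {0..1} \<inter> {u. c - u*d \<le> x}" using u assms by (auto simp: algebra_simps)
  qed
  have "measure lborel {1-u0..1} \<le> measure lborel ({0..1} \<inter> {u. c - u*d \<le> x})"
  proof (rule measure_mono_fmeasurable[OF sub])
    show "{1 - u0..1} \<in> sets lborel" by simp
    have "{0..1::real} \<in> fmeasurable lborel" by (simp add: fmeasurable_def emeasure_lborel_Icc_eq)
    then show "{0..1} \<inter> {u. c - u * d \<le> x} \<in> fmeasurable lborel"
      by (rule fmeasurable_Int_fmeasurable) (simp add: U01_sets)
  qed
  then show ?thesis using assms by (simp add: U01_measure)
qed

lemma r_le:
  assumes "0 \<le> d" "0 \<le> p" "p \<le> 1" and H: "\<And>w. 0 \<le> w \<Longrightarrow> w \<le> 1 \<Longrightarrow> c - d + w * d \<le> x \<Longrightarrow> w \<le> p"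
  shows "measure U01 {u. c - u*d \<le> x} \<le> p"
proof -
  have sub: "{0..1} \<inter> {u. c - u*d \<le> x} \<subseteq> {1-p..1}"
  proof
    fix u assume u: "u \<in> {0..1} \<inter> {u. c - u*d \<le> x}"
    have "1 - u \<le> p" using u by (intro H) (auto simp: algebra_simps)
    then show "u \<in> {1-p..1}" using u by auto
  qed
  have "measure lborel ({0..1} \<inter> {u. c - u*d \<le> x}) \<le> measure lborel {1-p..1}"
  proof (rule measure_mono_fmeasurable[OF sub])
    show "{0..1} \<inter> {u. c - u * d \<le> x} \<in> sets lborel" by (simp add: U01_sets)
    show "{1-p..1::real} \<in> fmeasurable lborel" by (simp add: fmeasurable_def emeasure_lborel_Icc_eq)
  qed
  then show ?thesis using assms by (simp add: U01_measure)
qed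

lemma r_01: "0 \<le> measure U01 A \<and> measure U01 A \<le> 1"
  using prob_space.prob_le_1[OF U01_prob] by auto

lemma r_mono: "x \<le> x' \<Longrightarrow> measure U01 {u. c - u*d \<le> x} \<le> measure U01 {u. c - u*d \<le> x'}"
proof -
  interpret prob_space U01 by (rule U01_prob)
  assume "x \<le> x'"
  then show ?thesis by (intro finite_measure_mono) (auto simp: U01_sets)
qed

lemma var_bound:
  fixes g :: "'a \<Rightarrow> real"
  assumes P: "prob_space \<Phi>" and gm: "g \<in> borel_measurable \<Phi>" and g0: "\<And>x. 0 \<le> g x" and g1: "\<And>x. g x \<le> 1"
    and M1: "1 \<le> M"
  shows "integrable (PiM {..<M} (\<lambda>_. \<Phi>)) (\<lambda>\<theta>s. ((\<Sum>m<M. g (\<theta>s m))/real M - (\<integral>x. g x \<partial>\<Phi>))^2)"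
    and "(\<integral>\<theta>s. ((\<Sum>m<M. g (\<theta>s m))/real M - (\<integral>x. g x \<partial>\<Phi>))^2 \<partial>PiM {..<M} (\<lambda>_. \<Phi>)) \<le> 1/real M"
proof -
  interpret P: prob_space \<Phi> by (rule P)
  interpret PP: product_prob_space "\<lambda>_. \<Phi>"
    by (simp add: product_prob_space_def product_prob_space_axioms_def product_sigma_finite_def P P.sigma_finite_measure_axioms)
  define I where "I = {..<M}"
  define \<mu> where "\<mu> = (\<integral>x. g x \<partial>\<Phi>)"
  interpret Q: prob_space "PiM I (\<lambda>_. \<Phi>)" by (rule prob_space_PiM) (rule P)
  have fI: "finite I" unfolding I_def by simp
  have mu0: "0 \<le> \<mu>" unfolding \<mu>_def using g0 by simp
  have intg: "integrable \<Phi> g" using gm g0 g1 by (intro P.integrable_const_bound[where B=1]) auto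
  have mu1: "\<mu> \<le> 1"
  proof -
    have "\<mu> \<le> (\<integral>x. 1 \<partial>\<Phi>)" unfolding \<mu>_def using intg g1 by (intro integral_mono) auto
    then show ?thesis by (simp add: P.prob_space)
  qed
  define Y where "Y m \<theta>s = g (\<theta>s m) - \<mu>" for m :: nat and \<theta>s :: "nat \<Rightarrow> 'a"
  have Ym[measurable]: "Y m \<in> borel_measurable (PiM I (\<lambda>_. \<Phi>))" if "m \<in> I" for m
    unfolding Y_def using that gm by measurable
  have Ybd: "\<bar>Y m \<theta>s\<bar> \<le> 1" for m \<theta>s unfolding Y_def using g0[of "\<theta>s m"] g1[of "\<theta>s m"] mu0 mu1 by auto
  have YYint: "integrable (PiM I (\<lambda>_. \<Phi>)) (\<lambda>\<theta>s. Y m \<theta>s * Y m' \<theta>s)" if "m \<in> I" "m' \<in> I" for m m'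
  proof (intro Q.integrable_const_bound[where B=1])
    show "AE x in PiM I (\<lambda>_. \<Phi>). norm (Y m x * Y m' x) \<le> 1"
      using Ybd by (auto simp: abs_mult intro!: mult_le_one)
  qed (use that in auto)
  have cross: "(\<integral>\<theta>s. Y m \<theta>s * Y m' \<theta>s \<partial>PiM I (\<lambda>_. \<Phi>)) = 0" if "m \<in> I" "m' \<in> I" "m \<noteq> m'" for m m'
  proof -
    define h where "h i x = (if i = m then g x - \<mu> else if i = m' then g x - \<mu> else 1)" for i x
    have eq: "Y m \<theta>s * Y m' \<theta>s = (\<Prod>i\<in>I. h i (\<theta>s i))" for \<theta>s
    proof -
      have "(\<Prod>i\<in>I. h i (\<theta>s i)) = (\<Prod>i\<in>{m,m'}. h i (\<theta>s i))"
        using that fI by (intro prod.mono_neutral_right) (auto simp: h_def)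
      also have "\<dots> = Y m \<theta>s * Y m' \<theta>s" using that by (simp add: h_def Y_def)
      finally show ?thesis by simp
    qed
    have hint: "integrable \<Phi> (h i)" for i
      unfolding h_def using intg by (cases "i = m"; cases "i = m'") (auto intro!: Bochner_Integration.integrable_diff)
    have "(\<integral>\<theta>s. Y m \<theta>s * Y m' \<theta>s \<partial>PiM I (\<lambda>_. \<Phi>)) = (\<Prod>i\<in>I. integral\<^sup>L \<Phi> (h i))"
      unfolding eq by (rule PP.product_integral_prod[OF fI hint])
    also have "integral\<^sup>L \<Phi> (h m) = 0" unfolding h_def using intg
      by (simp add: \<mu>_def P.prob_space)
    then have "(\<Prod>i\<in>I. integral\<^sup>L \<Phi> (h i)) = 0" using that fI by (intro prod_zero) auto
    finally show ?thesis .
  qed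
  have sq: "((\<Sum>m<M. g (\<theta>s m))/real M - \<mu>)^2 = (\<Sum>m\<in>I. \<Sum>m'\<in>I. Y m \<theta>s * Y m' \<theta>s) / (real M)^2" for \<theta>s
  proof -
    have "(\<Sum>m<M. g (\<theta>s m))/real M - \<mu> = (\<Sum>m\<in>I. Y m \<theta>s) / real M"
      using M1 by (simp add: Y_def I_def sum_subtractf field_simps)
    then show ?thesis by (simp add: power_divide power2_eq_square sum_product)
  qed
  have intsum: "integrable (PiM I (\<lambda>_. \<Phi>)) (\<lambda>\<theta>s. \<Sum>m\<in>I. \<Sum>m'\<in>I. Y m \<theta>s * Y m' \<theta>s)"
    using YYint by (intro Bochner_Integration.integrable_sum) auto
  have "integrable (PiM I (\<lambda>_. \<Phi>)) (\<lambda>\<theta>s. ((\<Sum>m<M. g (\<theta>s m))/real M - \<mu>)^2)"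
    unfolding sq using intsum by (rule Bochner_Integration.integrable_divide)
  then show "integrable (PiM {..<M} (\<lambda>_. \<Phi>)) (\<lambda>\<theta>s. ((\<Sum>m<M. g (\<theta>s m))/real M - (\<integral>x. g x \<partial>\<Phi>))^2)"
    unfolding \<mu>_def I_def .
  have "(\<integral>\<theta>s. (\<Sum>m\<in>I. \<Sum>m'\<in>I. Y m \<theta>s * Y m' \<theta>s) \<partial>PiM I (\<lambda>_. \<Phi>))
      = (\<Sum>m\<in>I. \<Sum>m'\<in>I. (\<integral>\<theta>s. Y m \<theta>s * Y m' \<theta>s \<partial>PiM I (\<lambda>_. \<Phi>)))"
    using YYint by (simp add: Bochner_Integration.integrable_sum)
  also have "\<dots> = (\<Sum>m\<in>I. (\<integral>\<theta>s. Y m \<theta>s * Y m \<theta>s \<partial>PiM I (\<lambda>_. \<Phi>)))"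
  proof (rule sum.cong[OF refl])
    fix m assume m: "m \<in> I"
    have "(\<Sum>m'\<in>I. (\<integral>\<theta>s. Y m \<theta>s * Y m' \<theta>s \<partial>PiM I (\<lambda>_. \<Phi>)))
        = (\<Sum>m'\<in>{m}. (\<integral>\<theta>s. Y m \<theta>s * Y m' \<theta>s \<partial>PiM I (\<lambda>_. \<Phi>)))"
      using m fI cross by (intro sum.mono_neutral_right) auto
    then show "(\<Sum>m'\<in>I. (\<integral>\<theta>s. Y m \<theta>s * Y m' \<theta>s \<partial>PiM I (\<lambda>_. \<Phi>))) = (\<integral>\<theta>s. Y m \<theta>s * Y m \<theta>s \<partial>PiM I (\<lambda>_. \<Phi>))"
      by simp
  qed
  also have "\<dots> \<le> (\<Sum>m\<in>I. 1)"
  proof (rule sum_mono)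
    fix m assume m: "m \<in> I"
    have "(\<integral>\<theta>s. Y m \<theta>s * Y m \<theta>s \<partial>PiM I (\<lambda>_. \<Phi>)) \<le> (\<integral>\<theta>s. 1 \<partial>PiM I (\<lambda>_. \<Phi>))"
    proof (intro integral_mono)
      fix x
      have "\<bar>Y m x\<bar> * \<bar>Y m x\<bar> \<le> 1" using Ybd by (intro mult_le_one) auto
      then show "Y m x * Y m x \<le> 1" by (metis abs_mult abs_le_D1)
    qed (use YYint[OF m m] in auto)
    then show "(\<integral>\<theta>s. Y m \<theta>s * Y m \<theta>s \<partial>PiM I (\<lambda>_. \<Phi>)) \<le> 1" by (simp add: Q.prob_space)
  qed
  also have "\<dots> = real M" unfolding I_def by simp
  finally have tot: "(\<integral>\<theta>s. (\<Sum>m\<in>I. \<Sum>m'\<in>I. Y m \<theta>s * Y m' \<theta>s) \<partial>PiM I (\<lambda>_. \<Phi>)) \<le> real M" .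
  have "(\<integral>\<theta>s. ((\<Sum>m<M. g (\<theta>s m))/real M - \<mu>)^2 \<partial>PiM I (\<lambda>_. \<Phi>))
     = (\<integral>\<theta>s. (\<Sum>m\<in>I. \<Sum>m'\<in>I. Y m \<theta>s * Y m' \<theta>s) \<partial>PiM I (\<lambda>_. \<Phi>)) / (real M)^2"
    unfolding sq by simp
  also have "\<dots> \<le> real M / (real M)^2" using tot by (intro divide_right_mono) auto
  also have "\<dots> = 1 / real M" using M1 by (simp add: power2_eq_square)
  finally show "(\<integral>\<theta>s. ((\<Sum>m<M. g (\<theta>s m))/real M - (\<integral>x. g x \<partial>\<Phi>))^2 \<partial>PiM {..<M} (\<lambda>_. \<Phi>)) \<le> 1/real M"
    unfolding \<mu>_def I_def .
qed

lemma pk_formula: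
  "measure_pmf.prob (pmf_of_set {0..E}) {k. S + k \<le> i}
     = max 0 (min 1 ((real i + 1 - real S)/(real E + 1)))"
proof -
  have fin: "finite {0..E}" "{0..E} \<noteq> {}" by auto
  have cardE: "card {0..E} = E + 1" by simp
  show ?thesis
  proof (cases "S \<le> i")
    case False
    then have "{0..E} \<inter> {k. S + k \<le> i} = {}" by auto
    moreover have "(real i + 1 - real S) \<le> 0" using False by simp
    ultimately show ?thesis using fin
      by (simp add: measure_pmf_of_set divide_nonpos_pos del: atLeastAtMost_iff)
  next
    case True
    then have "{0..E} \<inter> {k. S + k \<le> i} = {0..min E (i - S)}" by auto
    then have "measure_pmf.prob (pmf_of_set {0..E}) {k. S + k \<le> i} = real (min E (i - S) + 1) / real (E+1)"
      using fin by (simp add: measure_pmf_of_set del: atLeastAtMost_iff)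
    also have "\<dots> = max 0 (min 1 ((real i + 1 - real S)/(real E + 1)))"
    proof (cases "E \<le> i - S")
      case True
      then have "real i + 1 - real S \<ge> real E + 1" using \<open>S \<le> i\<close> by linarith
      then have "(real i + 1 - real S)/(real E + 1) \<ge> 1" by simp
      then show ?thesis using True by simp
    next
      case False
      then have "real (min E (i - S) + 1) = real i + 1 - real S" using \<open>S \<le> i\<close> by simp
      moreover have "(real i + 1 - real S)/(real E + 1) \<le> 1" using False \<open>S \<le> i\<close> by simp
      moreover have "(real i + 1 - real S)/(real E + 1) \<ge> 0" using \<open>S \<le> i\<close> by simp
      ultimately show ?thesis by (simp add: add.commute)
    qed
    finally show ?thesis .
  qed
qed

lemma pw:
  fixes S E i M :: nat and a d \<eta> :: real
  assumes d0: "0 \<le> d" and M1: "1 \<le> M" and eta: "0 < \<eta>" "1/real M \<le> \<eta>"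
  defines "p \<equiv> max 0 (min 1 ((real i + 1 - real S)/(real E + 1)))"
    and "err \<equiv> ((real S/real M - a)^2 + (real E/real M - d)^2)/\<eta>^2"
  shows "p \<le> measure U01 {u. (a+d) - u*d \<le> real(i+1)/real M + 2*\<eta>} + err"
    and "measure U01 {u. (a+d) - u*d \<le> real(i+1)/real M - 4*\<eta>} - err \<le> p"
proof -
  have Mpos: "real M > 0" using M1 by simp
  have p01: "0 \<le> p" "p \<le> 1" unfolding p_def by auto
  have err0: "0 \<le> err" unfolding err_def by simp
  define \<alpha> where "\<alpha> = real S/real M"
  define e where "e = real E/real M"
  define t where "t = real (i+1)/real M"
  have bad: "1 \<le> err" if "\<not> (\<bar>\<alpha> - a\<bar> \<le> \<eta> \<and> \<bar>e - d\<bar> \<le> \<eta>)"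
  proof -
    have "\<eta>^2 \<le> (\<alpha> - a)^2 + (e - d)^2"
    proof (cases "\<bar>\<alpha> - a\<bar> \<le> \<eta>")
      case True
      then have "\<bar>\<eta>\<bar> \<le> \<bar>e - d\<bar>" using that eta by auto
      then have "\<eta>^2 \<le> (e-d)^2" by (simp add: abs_le_square_iff)
      then show ?thesis using zero_le_power2[of "\<alpha> - a"] by linarith
    next
      case False
      then have "\<bar>\<eta>\<bar> \<le> \<bar>\<alpha> - a\<bar>" using eta by auto
      then have "\<eta>^2 \<le> (\<alpha> - a)^2" by (simp add: abs_le_square_iff)
      then show ?thesis using zero_le_power2[of "e - d"] by linarith
    qed
    then show ?thesis unfolding err_def \<alpha>_def e_def using eta by (simp add: le_divide_eq)
  qed
  have rel: "w * (e + 1/real M) \<le> t - \<alpha> \<longleftrightarrow> w * (real E + 1) \<le> real i + 1 - real S" for w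
  proof -
    have "w * (e + 1/real M) = (w * (real E + 1)) / real M" unfolding e_def using Mpos by (simp add: field_simps)
    moreover have "t - \<alpha> = (real i + 1 - real S) / real M" unfolding t_def \<alpha>_def using Mpos by (simp add: field_simps)
    ultimately show ?thesis using Mpos by (simp add: divide_le_cancel)
  qed
  have rel2: "w * (e + 1/real M) < t - \<alpha> \<longleftrightarrow> w * (real E + 1) < real i + 1 - real S" for w
  proof -
    have "w * (e + 1/real M) = (w * (real E + 1)) / real M" unfolding e_def using Mpos by (simp add: field_simps)
    moreover have "t - \<alpha> = (real i + 1 - real S) / real M" unfolding t_def \<alpha>_def using Mpos by (simp add: field_simps)
    ultimately show ?thesis using Mpos by (simp add: divide_less_cancel)
  qed
  have e0: "0 \<le> e" unfolding e_def by simp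
  show "p \<le> measure U01 {u. (a+d) - u*d \<le> real(i+1)/real M + 2*\<eta>} + err"
  proof (cases "\<bar>\<alpha> - a\<bar> \<le> \<eta> \<and> \<bar>e - d\<bar> \<le> \<eta>")
    case False
    then show ?thesis using bad p01 r_01[of "{u. (a+d) - u*d \<le> real(i+1)/real M + 2*\<eta>}"] by linarith
  next
    case good: True
    show ?thesis
    proof (cases "p = 0")
      case True then show ?thesis using err0 r_01 by (smt (verit))
    next
      case False
      then have pp: "p \<le> (real i + 1 - real S)/(real E + 1)" unfolding p_def by auto
      then have "p * (real E + 1) \<le> real i + 1 - real S" by (simp add: pos_le_divide_eq)
      then have h1: "p * (e + 1/real M) \<le> t - \<alpha>" using rel by blast
      have "p * d \<le> p * (e + \<eta>)" using good p01 by (intro mult_left_mono) auto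
      also have "\<dots> = p * e + p * \<eta>" by (simp add: algebra_simps)
      also have "\<dots> \<le> p * e + \<eta>" using p01 eta by (simp add: mult_left_le_one_le)
      finally have "a + p*d \<le> t + 2*\<eta>" using h1 good p01 Mpos
        by (smt (verit, best) divide_nonneg_nonneg mult_nonneg_nonneg of_nat_0_le_iff distrib_left)
      then have "(a+d) - d + p*d \<le> t + 2*\<eta>" by simp
      from r_ge[OF d0 p01 this] show ?thesis using err0 unfolding t_def by linarith
    qed
  qed
  show "measure U01 {u. (a+d) - u*d \<le> real(i+1)/real M - 4*\<eta>} - err \<le> p"
  proof (cases "\<bar>\<alpha> - a\<bar> \<le> \<eta> \<and> \<bar>e - d\<bar> \<le> \<eta>")
    case False
    then show ?thesis using bad p01 r_01[of "{u. (a+d) - u*d \<le> real(i+1)/real M - 4*\<eta>}"] by linarith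
  next
    case good: True
    have "measure U01 {u. (a+d) - u*d \<le> t - 4*\<eta>} \<le> p"
    proof (rule r_le[OF d0 p01])
      fix w assume w: "0 \<le> w" "w \<le> 1" "a + d - d + w * d \<le> t - 4 * \<eta>"
      have "w * e \<le> w * (d + \<eta>)" using good w by (intro mult_left_mono) auto
      also have "\<dots> = w * d + w * \<eta>" by (simp add: algebra_simps)
      also have "\<dots> \<le> w * d + \<eta>" using w eta by (simp add: mult_left_le_one_le)
      finally have we: "w * e \<le> w*d + \<eta>" .
      have "w / real M \<le> \<eta>" using w eta Mpos
        by (smt (verit, ccfv_SIG) divide_right_mono)
      then have "w * (e + 1/real M) < t - \<alpha>" using we w good eta
        by (simp add: distrib_left) linarith
      then have "w * (real E + 1) < real i + 1 - real S" using rel2 by blast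
      then have "w < (real i + 1 - real S)/(real E + 1)" by (simp add: pos_less_divide_eq)
      then show "w \<le> p" unfolding p_def using w by auto
    qed
    then show ?thesis using err0 unfolding t_def by linarith
  qed
qed

lemma card_filter_sum: "finite A \<Longrightarrow> real (card {m \<in> A. P m}) = (\<Sum>m\<in>A. if P m then 1 else 0)"
  by (simp add: sum.If_cases Int_def conj_commute)

lemma R_bound:
  fixes phi :: "'a::euclidean_space \<Rightarrow> 'b \<Rightarrow> real" and f :: "'a \<Rightarrow> 'b \<Rightarrow> real" and \<theta>t :: 'a
  assumes phim: "(\<lambda>\<theta>. phi \<theta> y) \<in> borel_measurable lborel" and phi0: "\<And>\<theta>. 0 \<le> phi \<theta> y"
    and phi1: "(\<integral>\<theta>. phi \<theta> y \<partial>lborel) = 1" and fm: "(\<lambda>\<theta>. f \<theta> y) \<in> borel_measurable lborel"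
    and M1: "1 \<le> M" and eta: "0 < \<eta>" "1/real M \<le> \<eta>"
  shows "R_rank phi f M i \<theta>t y \<le> r_cont phi f (real(i+1)/real M + 2*\<eta>) \<theta>t y + 2/(real M*\<eta>^2)"
    and "r_cont phi f (real(i+1)/real M - 4*\<eta>) \<theta>t y - 2/(real M*\<eta>^2) \<le> R_rank phi f M i \<theta>t y"
proof -
  note [measurable] = phim fm
  define \<Phi> where "\<Phi> = density lborel (\<lambda>\<theta>. ennreal (phi \<theta> y))"
  have intphi: "integrable lborel (\<lambda>\<theta>. phi \<theta> y)"
    using phi1 not_integrable_integral_eq by fastforce
  have P: "prob_space \<Phi>"
  proof (rule prob_spaceI)
    have "emeasure \<Phi> (space \<Phi>) = (\<integral>\<^sup>+ x. ennreal (phi x y) \<partial>lborel)"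
      unfolding \<Phi>_def by (simp add: emeasure_density)
    also have "\<dots> = ennreal (\<integral>x. phi x y \<partial>lborel)"
      using intphi phi0 by (intro nn_integral_eq_integral) auto
    finally show "emeasure \<Phi> (space \<Phi>) = 1" using phi1 by simp
  qed
  interpret P: prob_space \<Phi> by (rule P)
  interpret Q: prob_space "PiM {..<M} (\<lambda>_. \<Phi>)" by (rule prob_space_PiM) (rule P)
  have sPhi: "sets \<Phi> = sets lborel" unfolding \<Phi>_def by simp
  define c0 where "c0 = f \<theta>t y"
  define ga where "ga \<theta> = (if f \<theta> y < c0 then 1 else 0::real)" for \<theta>
  define gd where "gd \<theta> = (if f \<theta> y = c0 then 1 else 0::real)" for \<theta>
  have gam[measurable]: "ga \<in> borel_measurable lborel" unfolding ga_def by measurable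
  have gdm[measurable]: "gd \<in> borel_measurable lborel" unfolding gd_def by measurable
  have gam': "ga \<in> borel_measurable \<Phi>" using gam by (simp add: measurable_cong_sets[OF sPhi refl])
  have gdm': "gd \<in> borel_measurable \<Phi>" using gdm by (simp add: measurable_cong_sets[OF sPhi refl])
  define a where "a = (\<integral>\<theta>. ga \<theta> \<partial>\<Phi>)"
  define d where "d = (\<integral>\<theta>. gd \<theta> \<partial>\<Phi>)"
  have a_eq: "a = (\<integral>\<theta>. phi \<theta> y * ga \<theta> \<partial>lborel)"
    unfolding a_def \<Phi>_def using phi0 by (subst integral_density) auto
  have d_eq: "d = (\<integral>\<theta>. phi \<theta> y * gd \<theta> \<partial>lborel)"
    unfolding d_def \<Phi>_def using phi0 by (subst integral_density) auto
  have intind: "integrable lborel (\<lambda>\<theta>. indicator A \<theta> * phi \<theta> y)" if "A \<in> sets lborel" for A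
    using integrable_mult_indicator[OF that intphi] by simp
  have Dd: "D_atom phi f c0 y = d"
    unfolding D_atom_def d_eq gd_def by (intro Bochner_Integration.integral_cong) (auto simp: indicator_def)
  have Cad: "C_cdf phi f c0 y = a + d"
  proof -
    have "C_cdf phi f c0 y = (\<integral>\<theta>. indicator {\<theta>. f \<theta> y < c0} \<theta> * phi \<theta> y + indicator {\<theta>. f \<theta> y = c0} \<theta> * phi \<theta> y \<partial>lborel)"
      unfolding C_cdf_def by (intro Bochner_Integration.integral_cong) (auto simp: indicator_def)
    also have "\<dots> = (\<integral>\<theta>. indicator {\<theta>. f \<theta> y < c0} \<theta> * phi \<theta> y \<partial>lborel) + (\<integral>\<theta>. indicator {\<theta>. f \<theta> y = c0} \<theta> * phi \<theta> y \<partial>lborel)"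
      by (intro Bochner_Integration.integral_add intind) measurable
    also have "\<dots> = a + d" unfolding a_eq d_eq ga_def gd_def
      by (intro arg_cong2[where f="(+)"] Bochner_Integration.integral_cong) (auto simp: indicator_def)
    finally show ?thesis .
  qed
  have d0: "0 \<le> d" unfolding d_def gd_def by simp
  have r_eq: "r_cont phi f x \<theta>t y = measure U01 {u. (a+d) - u*d \<le> x}" for x
    unfolding r_cont_def c0_def[symmetric] Cad Dd ..
  define SA where "SA \<theta>s = (\<Sum>m<M. ga (\<theta>s m))" for \<theta>s :: "nat \<Rightarrow> 'a"
  define SD where "SD \<theta>s = (\<Sum>m<M. gd (\<theta>s m))" for \<theta>s :: "nat \<Rightarrow> 'a"
  have SAeq: "real (N_less f M \<theta>t y \<theta>s) = SA \<theta>s" for \<theta>s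
    unfolding N_less_def SA_def ga_def c0_def by (rule card_filter_sum) simp
  have SDeq: "real (N_equals f M \<theta>t y \<theta>s) = SD \<theta>s" for \<theta>s
    unfolding N_equals_def SD_def gd_def c0_def by (rule card_filter_sum) simp
  define pf where "pf \<theta>s = max 0 (min 1 ((real i + 1 - SA \<theta>s)/(SD \<theta>s + 1)))" for \<theta>s
  define err where "err \<theta>s = ((SA \<theta>s/real M - a)^2 + (SD \<theta>s/real M - d)^2)/\<eta>^2" for \<theta>s
  have R_eq: "R_rank phi f M i \<theta>t y = (\<integral>\<theta>s. pf \<theta>s \<partial>PiM {..<M} (\<lambda>_. \<Phi>))"
    unfolding R_rank_def samples_def \<Phi>_def[symmetric]
    by (intro Bochner_Integration.integral_cong refl) (simp add: pk_formula pf_def SAeq SDeq)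
  have SAm[measurable]: "SA \<in> borel_measurable (PiM {..<M} (\<lambda>_. \<Phi>))"
    unfolding SA_def using gam' by measurable
  have SDm[measurable]: "SD \<in> borel_measurable (PiM {..<M} (\<lambda>_. \<Phi>))"
    unfolding SD_def using gdm' by measurable
  have pfm: "pf \<in> borel_measurable (PiM {..<M} (\<lambda>_. \<Phi>))" unfolding pf_def by measurable
  have pfint: "integrable (PiM {..<M} (\<lambda>_. \<Phi>)) pf"
    by (rule Q.integrable_const_bound[where B=1]) (auto simp: pf_def pfm)
  have vA: "integrable (PiM {..<M} (\<lambda>_. \<Phi>)) (\<lambda>\<theta>s. (SA \<theta>s/real M - a)^2)"
      "(\<integral>\<theta>s. (SA \<theta>s/real M - a)^2 \<partial>PiM {..<M} (\<lambda>_. \<Phi>)) \<le> 1/real M"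
    using var_bound[OF P gam' _ _ M1, of ] unfolding SA_def a_def ga_def by auto
  have vD: "integrable (PiM {..<M} (\<lambda>_. \<Phi>)) (\<lambda>\<theta>s. (SD \<theta>s/real M - d)^2)"
      "(\<integral>\<theta>s. (SD \<theta>s/real M - d)^2 \<partial>PiM {..<M} (\<lambda>_. \<Phi>)) \<le> 1/real M"
    using var_bound[OF P gdm' _ _ M1, of ] unfolding SD_def d_def gd_def by auto
  have errint: "integrable (PiM {..<M} (\<lambda>_. \<Phi>)) err"
    unfolding err_def using vA(1) vD(1) by (intro Bochner_Integration.integrable_divide Bochner_Integration.integrable_add)
  have errI: "(\<integral>\<theta>s. err \<theta>s \<partial>PiM {..<M} (\<lambda>_. \<Phi>)) \<le> 2/(real M*\<eta>^2)"
  proof -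
    have "(\<integral>\<theta>s. err \<theta>s \<partial>PiM {..<M} (\<lambda>_. \<Phi>))
        = ((\<integral>\<theta>s. (SA \<theta>s/real M - a)^2 \<partial>PiM {..<M} (\<lambda>_. \<Phi>)) + (\<integral>\<theta>s. (SD \<theta>s/real M - d)^2 \<partial>PiM {..<M} (\<lambda>_. \<Phi>)))/\<eta>^2"
      unfolding err_def using vA(1) vD(1) by simp
    also have "\<dots> \<le> (1/real M + 1/real M)/\<eta>^2" using vA(2) vD(2) eta by (intro divide_right_mono) auto
    also have "\<dots> = 2/(real M*\<eta>^2)" by simp
    finally show ?thesis .
  qed
  have Mpos: "real M > 0" using M1 by simp
  have pw_inst: "pf \<theta>s \<le> measure U01 {u. (a+d) - u*d \<le> real(i+1)/real M + 2*\<eta>} + err \<theta>s"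
       "measure U01 {u. (a+d) - u*d \<le> real(i+1)/real M - 4*\<eta>} - err \<theta>s \<le> pf \<theta>s" for \<theta>s
    using pw[OF d0 M1 eta, where S="N_less f M \<theta>t y \<theta>s" and E="N_equals f M \<theta>t y \<theta>s" and i=i and a=a]
    unfolding pf_def err_def SAeq SDeq by auto
  show "R_rank phi f M i \<theta>t y \<le> r_cont phi f (real(i+1)/real M + 2*\<eta>) \<theta>t y + 2/(real M*\<eta>^2)"
  proof -
    have "R_rank phi f M i \<theta>t y \<le> (\<integral>\<theta>s. measure U01 {u. (a+d) - u*d \<le> real(i+1)/real M + 2*\<eta>} + err \<theta>s \<partial>PiM {..<M} (\<lambda>_. \<Phi>))"
      unfolding R_eq using pfint errint pw_inst(1) by (intro integral_mono) auto
    also have "\<dots> = measure U01 {u. (a+d) - u*d \<le> real(i+1)/real M + 2*\<eta>} + (\<integral>\<theta>s. err \<theta>s \<partial>PiM {..<M} (\<lambda>_. \<Phi>))"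
      using errint by (simp add: Q.prob_space)
    finally show ?thesis using errI unfolding r_eq by linarith
  qed
  show "r_cont phi f (real(i+1)/real M - 4*\<eta>) \<theta>t y - 2/(real M*\<eta>^2) \<le> R_rank phi f M i \<theta>t y"
  proof -
    have "(\<integral>\<theta>s. measure U01 {u. (a+d) - u*d \<le> real(i+1)/real M - 4*\<eta>} - err \<theta>s \<partial>PiM {..<M} (\<lambda>_. \<Phi>)) \<le> R_rank phi f M i \<theta>t y"
      unfolding R_eq using pfint errint pw_inst(2) by (intro integral_mono) auto
    moreover have "(\<integral>\<theta>s. measure U01 {u. (a+d) - u*d \<le> real(i+1)/real M - 4*\<eta>} - err \<theta>s \<partial>PiM {..<M} (\<lambda>_. \<Phi>))
       = measure U01 {u. (a+d) - u*d \<le> real(i+1)/real M - 4*\<eta>} - (\<integral>\<theta>s. err \<theta>s \<partial>PiM {..<M} (\<lambda>_. \<Phi>))"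
      using errint by (simp add: Q.prob_space)
    ultimately show ?thesis using errI unfolding r_eq by linarith
  qed
qed

lemma meas_conv:
  fixes g :: "'a::euclidean_space \<times> 'b::euclidean_space \<Rightarrow> real"
  assumes "g \<in> borel_measurable borel"
  shows "g \<in> borel_measurable (lborel \<Otimes>\<^sub>M lborel)"
  using assms by (simp add: lborel_prod)

locale sbc =
  fixes prior :: "'a::euclidean_space \<Rightarrow> real"
    and obs :: "'b::euclidean_space \<Rightarrow> 'a \<Rightarrow> real"
    and phi :: "'a \<Rightarrow> 'b \<Rightarrow> real"
    and f :: "'a \<Rightarrow> 'b \<Rightarrow> real"
  assumes prior_meas[measurable]: "prior \<in> borel_measurable lborel"
    and obs_meas: "(\<lambda>p. obs (snd p) (fst p)) \<in> borel_measurable borel"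
    and phi_meas: "(\<lambda>p. phi (fst p) (snd p)) \<in> borel_measurable borel"
    and f_meas: "(\<lambda>p. f (fst p) (snd p)) \<in> borel_measurable borel"
    and prior_nonneg: "\<And>\<theta>. prior \<theta> \<ge> 0"
    and prior_int: "(\<integral>\<theta>. prior \<theta> \<partial>lborel) = 1"
    and obs_nonneg: "\<And>y \<theta>. obs y \<theta> \<ge> 0"
    and obs_int: "\<And>\<theta>. (\<integral>y. obs y \<theta> \<partial>lborel) = 1"
    and phi_nonneg: "\<And>\<theta> y. phi \<theta> y \<ge> 0"
    and phi_int: "\<And>y. (\<integral>\<theta>. phi \<theta> y \<partial>lborel) = 1"
begin

lemma phiM[measurable]: "(\<lambda>(\<theta>,y). phi \<theta> y) \<in> borel_measurable (lborel \<Otimes>\<^sub>M lborel)"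
  using meas_conv[OF phi_meas] by (simp add: split_beta')

lemma fM[measurable]: "(\<lambda>(\<theta>,y). f \<theta> y) \<in> borel_measurable (lborel \<Otimes>\<^sub>M lborel)"
  using meas_conv[OF f_meas] by (simp add: split_beta')

lemma obsM[measurable]: "(\<lambda>(y,\<theta>). obs y \<theta>) \<in> borel_measurable (lborel \<Otimes>\<^sub>M lborel)"
proof -
  have "(\<lambda>p. obs (snd p) (fst p)) \<in> borel_measurable (lborel \<Otimes>\<^sub>M lborel)"
    using meas_conv[OF obs_meas] .
  then show ?thesis by (subst measurable_pair_swap_iff) (simp add: split_beta')
qed

lemma margM[measurable]: "marg prior obs \<in> borel_measurable lborel"
  unfolding marg_def[abs_def] by measurable

lemma postM[measurable]: "(\<lambda>(\<theta>,y). post prior obs \<theta> y) \<in> borel_measurable (lborel \<Otimes>\<^sub>M lborel)"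
  unfolding post_def by measurable

lemma CM[measurable]: "(\<lambda>(s,y). C_cdf phi f s y) \<in> borel_measurable (lborel \<Otimes>\<^sub>M lborel)"
  unfolding C_cdf_def by measurable

lemma DM[measurable]: "(\<lambda>(s,y). D_atom phi f s y) \<in> borel_measurable (lborel \<Otimes>\<^sub>M lborel)"
  unfolding D_atom_def by measurable

lemma rM[measurable]: "(\<lambda>(\<theta>,y). r_cont phi f x \<theta> y) \<in> borel_measurable (lborel \<Otimes>\<^sub>M lborel)"
proof -
  interpret U: prob_space U01 by (rule U01_prob)
  have eq: "r_cont phi f x \<theta> y = (\<integral>u. indicator {u. C_cdf phi f (f \<theta> y) y - u * D_atom phi f (f \<theta> y) y \<le> x} u \<partial>U01)" for \<theta> y
    unfolding r_cont_def by simp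
  show ?thesis unfolding eq by measurable
qed

lemma qM[measurable]: "(\<lambda>y. q_cont prior obs phi f x y) \<in> borel_measurable lborel"
  unfolding q_cont_def by measurable

end

context sbc begin

lemma phi_y_meas[measurable]: "(\<lambda>\<theta>. phi \<theta> y) \<in> borel_measurable lborel" by measurable
lemma f_y_meas[measurable]: "(\<lambda>\<theta>. f \<theta> y) \<in> borel_measurable lborel" by measurable

lemma samples_prob: "prob_space (samples phi M y)"
proof -
  have intphi: "integrable lborel (\<lambda>\<theta>. phi \<theta> y)"
    using phi_int[of y] not_integrable_integral_eq by fastforce
  have "prob_space (density lborel (\<lambda>\<theta>. ennreal (phi \<theta> y)))"
  proof (rule prob_spaceI)
    have "emeasure (density lborel (\<lambda>\<theta>. ennreal (phi \<theta> y))) (space lborel) = (\<integral>\<^sup>+ x. ennreal (phi x y) \<partial>lborel)"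
      by (simp add: emeasure_density)
    also have "\<dots> = ennreal (\<integral>x. phi x y \<partial>lborel)"
      using intphi phi_nonneg by (intro nn_integral_eq_integral) auto
    finally show "emeasure (density lborel (\<lambda>\<theta>. ennreal (phi \<theta> y))) (space (density lborel (\<lambda>\<theta>. ennreal (phi \<theta> y)))) = 1"
      using phi_int[of y] by simp
  qed
  then show ?thesis unfolding samples_def by (intro prob_space_PiM)
qed

lemma RM[measurable]: "(\<lambda>\<theta>t. R_rank phi f M i \<theta>t y) \<in> borel_measurable lborel"
proof -
  interpret S: prob_space "PiM {..<M} (\<lambda>_. density lborel (\<lambda>\<theta>. ennreal (phi \<theta> y)))"
    by (rule samples_prob[unfolded samples_def])
  have eq: "R_rank phi f M i \<theta>t y = (\<integral>\<theta>s. max 0 (min 1 ((real i + 1 - (\<Sum>m<M. if f (\<theta>s m) y < f \<theta>t y then 1 else 0))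
       / ((\<Sum>m<M. if f (\<theta>s m) y = f \<theta>t y then 1 else 0) + 1))) \<partial>samples phi M y)" for \<theta>t
    unfolding R_rank_def pk_formula N_less_def N_equals_def
    by (intro Bochner_Integration.integral_cong refl) (simp only: card_filter_sum[OF finite_lessThan])
  show ?thesis unfolding eq unfolding samples_def
    by (rule S.borel_measurable_lebesgue_integral) measurable
qed

lemma R_01: "0 \<le> R_rank phi f M i \<theta>t y \<and> R_rank phi f M i \<theta>t y \<le> 1"
proof -
  interpret S: prob_space "samples phi M y" by (rule samples_prob)
  let ?g = "\<lambda>\<theta>s. measure_pmf.prob (pmf_of_set {0..N_equals f M \<theta>t y \<theta>s}) {k. N_less f M \<theta>t y \<theta>s + k \<le> i}"
  have "0 \<le> (\<integral>\<theta>s. ?g \<theta>s \<partial>samples phi M y)" by simp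
  moreover have "(\<integral>\<theta>s. ?g \<theta>s \<partial>samples phi M y) \<le> 1"
  proof (cases "integrable (samples phi M y) ?g")
    case True
    then have "(\<integral>\<theta>s. ?g \<theta>s \<partial>samples phi M y) \<le> (\<integral>\<theta>s. 1 \<partial>samples phi M y)"
      by (intro integral_mono) auto
    then show ?thesis by (simp add: S.prob_space)
  next
    case False then show ?thesis by (simp add: not_integrable_integral_eq)
  qed
  ultimately show ?thesis unfolding R_rank_def by simp
qed

lemma marg_nonneg: "0 \<le> marg prior obs y"
  unfolding marg_def using obs_nonneg prior_nonneg by simp

lemma post_nonneg: "0 \<le> post prior obs \<theta> y"
  unfolding post_def using obs_nonneg prior_nonneg marg_nonneg by simp

lemma post_facts:
  assumes m: "marg prior obs y \<noteq> 0"
  shows "integrable lborel (\<lambda>\<theta>. post prior obs \<theta> y)" "(\<integral>\<theta>. post prior obs \<theta> y \<partial>lborel) = 1"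
proof -
  have int: "integrable lborel (\<lambda>\<theta>. obs y \<theta> * prior \<theta>)"
    using m not_integrable_integral_eq unfolding marg_def by fastforce
  show "integrable lborel (\<lambda>\<theta>. post prior obs \<theta> y)"
    unfolding post_def using int by simp
  show "(\<integral>\<theta>. post prior obs \<theta> y \<partial>lborel) = 1"
    unfolding post_def using m by (simp add: marg_def)
qed

lemma post_int_bound:
  assumes m: "marg prior obs y \<noteq> 0" and g: "g \<in> borel_measurable lborel" and gb: "\<And>\<theta>. \<bar>g \<theta>\<bar> \<le> 1"
  shows "integrable lborel (\<lambda>\<theta>. post prior obs \<theta> y * g \<theta>)"
proof (rule Bochner_Integration.integrable_bound[OF post_facts(1)[OF m]])
  show "(\<lambda>\<theta>. post prior obs \<theta> y * g \<theta>) \<in> borel_measurable lborel" using g by measurable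
  show "AE x in lborel. norm (post prior obs x y * g x) \<le> norm (post prior obs x y)"
    using gb post_nonneg by (auto simp: abs_mult intro!: mult_left_le)
qed

lemma r_meas_y[measurable]: "(\<lambda>\<theta>. r_cont phi f x \<theta> y) \<in> borel_measurable lborel" by measurable

lemma r_cont_01: "0 \<le> r_cont phi f x \<theta> y \<and> r_cont phi f x \<theta> y \<le> 1"
  unfolding r_cont_def by (rule r_01)

lemma r01': "\<bar>r_cont phi f x \<theta> y\<bar> \<le> 1"
  using r_cont_01[of x \<theta> y] by auto

lemma r_cont_mono: "x \<le> x' \<Longrightarrow> r_cont phi f x \<theta> y \<le> r_cont phi f x' \<theta> y"
  unfolding r_cont_def by (rule r_mono)

lemma q_facts:
  assumes m: "marg prior obs y \<noteq> 0"
  shows "0 \<le> q_cont prior obs phi f x y" "q_cont prior obs phi f x y \<le> 1"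
    and "x \<le> x' \<Longrightarrow> q_cont prior obs phi f x y \<le> q_cont prior obs phi f x' y"
proof -
  have ri: "integrable lborel (\<lambda>\<theta>. post prior obs \<theta> y * r_cont phi f x \<theta> y)" for x
    by (rule post_int_bound[OF m]) (auto simp: r01')
  show "0 \<le> q_cont prior obs phi f x y" unfolding q_cont_def
    using post_nonneg r_cont_01 by (intro Bochner_Integration.integral_nonneg) simp
  have "q_cont prior obs phi f x y \<le> (\<integral>\<theta>. post prior obs \<theta> y \<partial>lborel)" unfolding q_cont_def
    using ri post_facts[OF m] post_nonneg r01'
    by (intro integral_mono) (auto intro!: mult_left_le simp: abs_le_iff)
  then show "q_cont prior obs phi f x y \<le> 1" using post_facts[OF m] by simp
  assume "x \<le> x'"
  then show "q_cont prior obs phi f x y \<le> q_cont prior obs phi f x' y" unfolding q_cont_def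
    using ri post_nonneg r_cont_mono by (intro integral_mono) (auto intro!: mult_left_mono)
qed

lemma Q_bounds:
  assumes m: "marg prior obs y \<noteq> 0" and M1: "1 \<le> M" and eta: "0 < \<eta>" "1/real M \<le> \<eta>"
  shows "Q_rank prior obs phi f M i y \<le> q_cont prior obs phi f (real(i+1)/real M + 2*\<eta>) y + 2/(real M*\<eta>^2)"
    and "q_cont prior obs phi f (real(i+1)/real M - 4*\<eta>) y - 2/(real M*\<eta>^2) \<le> Q_rank prior obs phi f M i y"
proof -
  let ?P = "\<lambda>\<theta>. post prior obs \<theta> y"
  let ?R = "\<lambda>\<theta>. R_rank phi f M i \<theta> y"
  let ?e = "2/(real M*\<eta>^2)"
  have Rint: "integrable lborel (\<lambda>\<theta>. ?P \<theta> * ?R \<theta>)"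
    by (rule post_int_bound[OF m]) (auto simp: abs_le_iff dest: spec[of _ 0] intro: R_01[THEN conjunct2] order.trans[OF _ R_01[THEN conjunct1]])
  have ri: "integrable lborel (\<lambda>\<theta>. ?P \<theta> * r_cont phi f x \<theta> y)" for x
    by (rule post_int_bound[OF m]) (auto simp: r01')
  have Pint: "integrable lborel ?P" using post_facts[OF m] by simp
  have Rb: "?R \<theta> \<le> r_cont phi f (real(i+1)/real M + 2*\<eta>) \<theta> y + ?e"
    "r_cont phi f (real(i+1)/real M - 4*\<eta>) \<theta> y - ?e \<le> ?R \<theta>" for \<theta>
    using R_bound[OF phi_y_meas phi_nonneg phi_int f_y_meas M1 eta] by auto
  show "Q_rank prior obs phi f M i y \<le> q_cont prior obs phi f (real(i+1)/real M + 2*\<eta>) y + ?e"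
  proof -
    have "Q_rank prior obs phi f M i y \<le> (\<integral>\<theta>. ?P \<theta> * r_cont phi f (real(i+1)/real M + 2*\<eta>) \<theta> y + ?e * ?P \<theta> \<partial>lborel)"
      unfolding Q_rank_def
    proof (intro integral_mono)
      fix \<theta>
      show "?P \<theta> * ?R \<theta> \<le> ?P \<theta> * r_cont phi f (real(i+1)/real M + 2*\<eta>) \<theta> y + ?e * ?P \<theta>"
        using mult_left_mono[OF Rb(1)[of \<theta>] post_nonneg[of \<theta> y]] by (simp add: algebra_simps)
    qed (use Rint ri Pint in auto)
    also have "\<dots> = q_cont prior obs phi f (real(i+1)/real M + 2*\<eta>) y + ?e"
      unfolding q_cont_def using ri Pint post_facts[OF m] by simp
    finally show ?thesis .
  qed
  show "q_cont prior obs phi f (real(i+1)/real M - 4*\<eta>) y - ?e \<le> Q_rank prior obs phi f M i y"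
  proof -
    have "q_cont prior obs phi f (real(i+1)/real M - 4*\<eta>) y - ?e = (\<integral>\<theta>. ?P \<theta> * r_cont phi f (real(i+1)/real M - 4*\<eta>) \<theta> y - ?e * ?P \<theta> \<partial>lborel)"
      unfolding q_cont_def using ri Pint post_facts[OF m] by simp
    also have "\<dots> \<le> Q_rank prior obs phi f M i y"
      unfolding Q_rank_def
    proof (intro integral_mono)
      fix \<theta>
      show "?P \<theta> * r_cont phi f (real(i+1)/real M - 4*\<eta>) \<theta> y - ?e * ?P \<theta> \<le> ?P \<theta> * ?R \<theta>"
        using mult_left_mono[OF Rb(2)[of \<theta>] post_nonneg[of \<theta> y]] by (simp add: algebra_simps)
    qed (use Rint ri Pint in auto)
    finally show ?thesis .
  qed
qed

end

context sbc begin

lemma marg_int: "integrable lborel (marg prior obs)" "(\<integral>y. marg prior obs y \<partial>lborel) \<le> 1"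
proof -
  have PS: "pair_sigma_finite (lborel::'a measure) (lborel::'b measure)"
    by (simp add: pair_sigma_finite_def lborel.sigma_finite_measure_axioms)
  have pt: "ennreal (marg prior obs y) \<le> (\<integral>\<^sup>+\<theta>. ennreal (obs y \<theta> * prior \<theta>) \<partial>lborel)" for y
  proof (cases "integrable lborel (\<lambda>\<theta>. obs y \<theta> * prior \<theta>)")
    case True
    then show ?thesis unfolding marg_def using obs_nonneg prior_nonneg
      by (subst nn_integral_eq_integral) auto
  next
    case False
    then show ?thesis unfolding marg_def by (simp add: not_integrable_integral_eq)
  qed
  have "(\<integral>\<^sup>+y. ennreal (marg prior obs y) \<partial>lborel) \<le> (\<integral>\<^sup>+y. (\<integral>\<^sup>+\<theta>. ennreal (obs y \<theta> * prior \<theta>) \<partial>lborel) \<partial>lborel)"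
    by (intro nn_integral_mono pt)
  also have "\<dots> = (\<integral>\<^sup>+\<theta>. (\<integral>\<^sup>+y. ennreal (obs y \<theta> * prior \<theta>) \<partial>lborel) \<partial>lborel)"
    by (rule pair_sigma_finite.Fubini'[OF PS, where f="\<lambda>\<theta> y. ennreal (obs y \<theta> * prior \<theta>)"]) measurable
  also have "\<dots> = (\<integral>\<^sup>+\<theta>. ennreal (prior \<theta>) \<partial>lborel)"
  proof (intro nn_integral_cong)
    fix \<theta> :: 'a
    have oi: "integrable lborel (\<lambda>y. obs y \<theta>)"
      using obs_int[of \<theta>] not_integrable_integral_eq by fastforce
    have "(\<integral>\<^sup>+y. ennreal (obs y \<theta> * prior \<theta>) \<partial>lborel) = (\<integral>\<^sup>+y. ennreal (obs y \<theta>) * ennreal (prior \<theta>) \<partial>lborel)"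
      using obs_nonneg prior_nonneg by (simp add: ennreal_mult)
    also have "\<dots> = (\<integral>\<^sup>+y. ennreal (obs y \<theta>) \<partial>lborel) * ennreal (prior \<theta>)"
      by (rule nn_integral_multc) measurable
    also have "(\<integral>\<^sup>+y. ennreal (obs y \<theta>) \<partial>lborel) = 1"
      using oi obs_nonneg obs_int[of \<theta>] by (subst nn_integral_eq_integral) auto
    finally show "(\<integral>\<^sup>+y. ennreal (obs y \<theta> * prior \<theta>) \<partial>lborel) = ennreal (prior \<theta>)" by simp
  qed
  also have "\<dots> = 1"
  proof -
    have pi: "integrable lborel prior" using prior_int not_integrable_integral_eq by fastforce
    then show ?thesis using prior_nonneg prior_int by (subst nn_integral_eq_integral) auto
  qed
  finally have nn: "(\<integral>\<^sup>+y. ennreal (marg prior obs y) \<partial>lborel) \<le> 1" .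
  show mi: "integrable lborel (marg prior obs)"
    using nn marg_nonneg by (intro integrableI_nonneg) (auto simp: top_unique ennreal_le_1 less_top[symmetric] intro: order.strict_trans1[OF nn])
  have "ennreal (\<integral>y. marg prior obs y \<partial>lborel) = (\<integral>\<^sup>+y. ennreal (marg prior obs y) \<partial>lborel)"
    using mi marg_nonneg by (subst nn_integral_eq_integral) auto
  then show "(\<integral>y. marg prior obs y \<partial>lborel) \<le> 1" using nn by (metis ennreal_le_1)
qed

lemma part1:
  assumes hyp: "\<forall>\<epsilon>>0. \<exists>M0. \<forall>M\<ge>M0. \<forall>i\<le>M.
                 \<bar>Q_rank prior obs phi f M i y - real (i + 1) / real (M + 1)\<bar> < \<epsilon>"
  shows "\<forall>x\<in>{0..1}. q_cont prior obs phi f x y = x"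
proof -
  have m: "marg prior obs y \<noteq> 0"
  proof
    assume m0: "marg prior obs y = 0"
    then have "Q_rank prior obs phi f M i y = 0" for M i
      unfolding Q_rank_def post_def by simp
    moreover obtain M0 where "\<forall>M\<ge>M0. \<forall>i\<le>M. \<bar>Q_rank prior obs phi f M i y - real (i + 1) / real (M + 1)\<bar> < 1/2"
      using hyp by (meson half_gt_zero zero_less_one)
    ultimately have "\<bar>0 - real (M0 + 1) / real (M0 + 1)\<bar> < 1/2" by fastforce
    then show False by simp
  qed
  show ?thesis
  proof
    fix x :: real assume x: "x \<in> {0..1}"
    show "q_cont prior obs phi f x y = x"
    proof (rule sandwich[where Q="\<lambda>M i. Q_rank prior obs phi f M i y"])
      show "mono (\<lambda>x. q_cont prior obs phi f x y)" by (rule monoI) (rule q_facts(3)[OF m])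
      show "\<And>x. 0 \<le> q_cont prior obs phi f x y \<and> q_cont prior obs phi f x y \<le> 1" using q_facts[OF m] by auto
      show "\<And>M i \<eta>. 1 \<le> M \<Longrightarrow> 0 < \<eta> \<Longrightarrow> 1/real M \<le> \<eta> \<Longrightarrow> i \<le> M \<Longrightarrow>
        Q_rank prior obs phi f M i y \<le> q_cont prior obs phi f (real (i+1)/real M + 2*\<eta>) y + 2/(real M*\<eta>^2)"
        using Q_bounds(1)[OF m] by blast
      show "\<And>M i \<eta>. 1 \<le> M \<Longrightarrow> 0 < \<eta> \<Longrightarrow> 1/real M \<le> \<eta> \<Longrightarrow> i \<le> M \<Longrightarrow>
        Q_rank prior obs phi f M i y = 0 \<or> q_cont prior obs phi f (real (i+1)/real M - 4*\<eta>) y - 2/(real M*\<eta>^2) \<le> Q_rank prior obs phi f M i y"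
        using Q_bounds(2)[OF m] by blast
    qed (use hyp x in auto)
  qed
qed

lemma part2:
  assumes hyp: "\<forall>\<epsilon>>0. \<exists>M0. \<forall>M\<ge>M0. \<forall>i\<le>M.
             \<bar>(\<integral>y. Q_rank prior obs phi f M i y * marg prior obs y \<partial>lborel)
                - real (i + 1) / real (M + 1)\<bar> < \<epsilon>"
  shows "passes_continuous_SBC prior obs phi f"
proof -
  let ?W = "marg prior obs"
  let ?qt = "\<lambda>x. (\<integral>y. q_cont prior obs phi f x y * ?W y \<partial>lborel)"
  let ?Qt = "\<lambda>M i. (\<integral>y. Q_rank prior obs phi f M i y * ?W y \<partial>lborel)"
  have Wi: "integrable lborel ?W" and W1: "(\<integral>y. ?W y \<partial>lborel) \<le> 1" using marg_int by auto
  have W0: "(\<integral>y. ?W y \<partial>lborel) \<ge> 0" using marg_nonneg by simp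
  have qW: "0 \<le> q_cont prior obs phi f x y * ?W y \<and> q_cont prior obs phi f x y * ?W y \<le> ?W y" for x y
  proof (cases "?W y = 0")
    case True then show ?thesis by simp
  next
    case False then show ?thesis using q_facts[OF False, of x] marg_nonneg[of y]
      by (auto intro: mult_left_le_one_le)
  qed
  have qWi: "integrable lborel (\<lambda>y. q_cont prior obs phi f x y * ?W y)" for x
  proof (rule Bochner_Integration.integrable_bound[OF Wi])
    show "(\<lambda>y. q_cont prior obs phi f x y * ?W y) \<in> borel_measurable lborel" by measurable
    show "AE y in lborel. norm (q_cont prior obs phi f x y * ?W y) \<le> norm (?W y)"
      using qW marg_nonneg by auto
  qed
  have "?qt x = x" if x: "x \<in> {0..1}" for x
  proof (rule sandwich[where Q="?Qt" and q="?qt"])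
    show "mono ?qt"
    proof (rule monoI, rule integral_mono)
      fix x x' :: real and y assume xx: "x \<le> x'"
      show "q_cont prior obs phi f x y * ?W y \<le> q_cont prior obs phi f x' y * ?W y"
      proof (cases "?W y = 0")
        case False then show ?thesis using q_facts(3)[OF False xx] marg_nonneg[of y] by (intro mult_right_mono)
      qed simp
    qed (use qWi in auto)
    show "0 \<le> ?qt x \<and> ?qt x \<le> 1" for x
    proof
      show "0 \<le> ?qt x" using qW by (intro Bochner_Integration.integral_nonneg) auto
      have "?qt x \<le> (\<integral>y. ?W y \<partial>lborel)" using qW qWi Wi by (intro integral_mono) auto
      then show "?qt x \<le> 1" using W1 by linarith
    qed
    show "?Qt M i \<le> ?qt (real (i+1)/real M + 2*\<eta>) + 2/(real M*\<eta>^2)"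
      if "1 \<le> M" "0 < \<eta>" "1/real M \<le> \<eta>" "i \<le> M" for M i \<eta>
    proof (cases "integrable lborel (\<lambda>y. Q_rank prior obs phi f M i y * ?W y)")
      case True
      let ?e = "2/(real M*\<eta>^2)"
      have e0: "0 \<le> ?e" using that by simp
      have "?Qt M i \<le> (\<integral>y. q_cont prior obs phi f (real (i+1)/real M + 2*\<eta>) y * ?W y + ?e * ?W y \<partial>lborel)"
      proof (intro integral_mono)
        fix y
        show "Q_rank prior obs phi f M i y * ?W y \<le> q_cont prior obs phi f (real (i+1)/real M + 2*\<eta>) y * ?W y + ?e * ?W y"
        proof (cases "?W y = 0")
          case False
          from mult_right_mono[OF Q_bounds(1)[OF False that(1-3), of i] marg_nonneg[of y]]
          show ?thesis by (simp add: algebra_simps)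
        qed simp
      qed (use True qWi Wi in auto)
      also have "\<dots> = ?qt (real (i+1)/real M + 2*\<eta>) + ?e * (\<integral>y. ?W y \<partial>lborel)"
        using qWi Wi by simp
      also have "\<dots> \<le> ?qt (real (i+1)/real M + 2*\<eta>) + ?e" using mult_left_le[OF W1 e0]
        by linarith
      finally show ?thesis .
    next
      case False
      then have "?Qt M i = 0" by (simp add: not_integrable_integral_eq)
      moreover have "0 \<le> ?qt (real (i+1)/real M + 2*\<eta>)" using qW by (intro Bochner_Integration.integral_nonneg) auto
      moreover have "0 \<le> 2/(real M*\<eta>^2)" using that by simp
      ultimately show ?thesis by linarith
    qed
    show "?Qt M i = 0 \<or> ?qt (real (i+1)/real M - 4*\<eta>) - 2/(real M*\<eta>^2) \<le> ?Qt M i"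
      if "1 \<le> M" "0 < \<eta>" "1/real M \<le> \<eta>" "i \<le> M" for M i \<eta>
    proof (cases "integrable lborel (\<lambda>y. Q_rank prior obs phi f M i y * ?W y)")
      case True
      let ?e = "2/(real M*\<eta>^2)"
      have e0: "0 \<le> ?e" using that by simp
      have "?qt (real (i+1)/real M - 4*\<eta>) - ?e \<le> ?qt (real (i+1)/real M - 4*\<eta>) - ?e * (\<integral>y. ?W y \<partial>lborel)"
        using mult_left_le[OF W1 e0] by linarith
      also have "\<dots> = (\<integral>y. q_cont prior obs phi f (real (i+1)/real M - 4*\<eta>) y * ?W y - ?e * ?W y \<partial>lborel)"
        using qWi Wi by simp
      also have "\<dots> \<le> ?Qt M i"
      proof (intro integral_mono)
        fix y
        show "q_cont prior obs phi f (real (i+1)/real M - 4*\<eta>) y * ?W y - ?e * ?W y \<le> Q_rank prior obs phi f M i y * ?W y"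
        proof (cases "?W y = 0")
          case False
          from mult_right_mono[OF Q_bounds(2)[OF False that(1-3), of i] marg_nonneg[of y]]
          show ?thesis by (simp add: algebra_simps)
        qed simp
      qed (use True qWi Wi in auto)
      finally show ?thesis by simp
    next
      case False
      then show ?thesis by (simp add: not_integrable_integral_eq)
    qed
  qed (use hyp x in auto)
  then show ?thesis unfolding passes_continuous_SBC_def by auto
qed

end

theorem theorem2:
  fixes prior :: "'a::euclidean_space \<Rightarrow> real"
    and obs :: "'b::euclidean_space \<Rightarrow> 'a \<Rightarrow> real"
    and phi :: "'a \<Rightarrow> 'b \<Rightarrow> real"
    and f :: "'a \<Rightarrow> 'b \<Rightarrow> real"
  assumes prior_meas: "prior \<in> borel_measurable lborel"
    and prior_nonneg: "\<And>\<theta>. prior \<theta> \<ge> 0"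
    and prior_int: "(\<integral>\<theta>. prior \<theta> \<partial>lborel) = 1"
    and obs_meas: "(\<lambda>p. obs (snd p) (fst p)) \<in> borel_measurable borel"
    and obs_nonneg: "\<And>y \<theta>. obs y \<theta> \<ge> 0"
    and obs_int: "\<And>\<theta>. (\<integral>y. obs y \<theta> \<partial>lborel) = 1"
    and phi_meas: "(\<lambda>p. phi (fst p) (snd p)) \<in> borel_measurable borel"
    and phi_nonneg: "\<And>\<theta> y. phi \<theta> y \<ge> 0"
    and phi_int: "\<And>y. (\<integral>\<theta>. phi \<theta> y \<partial>lborel) = 1"
    and f_meas: "(\<lambda>p. f (fst p) (snd p)) \<in> borel_measurable borel"
  shows "(\<forall>y. (\<forall>\<epsilon>>0. \<exists>M0. \<forall>M\<ge>M0. \<forall>i\<le>M.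
                 \<bar>Q_rank prior obs phi f M i y - real (i + 1) / real (M + 1)\<bar> < \<epsilon>)
              \<longrightarrow> (\<forall>x\<in>{0..1}. q_cont prior obs phi f x y = x))
       \<and> ((\<forall>\<epsilon>>0. \<exists>M0. \<forall>M\<ge>M0. \<forall>i\<le>M.
             \<bar>(\<integral>y. Q_rank prior obs phi f M i y * marg prior obs y \<partial>lborel)
                - real (i + 1) / real (M + 1)\<bar> < \<epsilon>)
          \<longrightarrow> passes_continuous_SBC prior obs phi f)"
proof -
  interpret sbc prior obs phi f
    using assms by (unfold_locales) auto
  show ?thesis using part1 part2 by blast
qed


end
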